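(* Let the Mathieu group $M_{12}$ act (sharply $5$-transitively) on a $12$-element set $\Omega$, with a distinguished point $F\in\Omega$. Then (a) $hd((M_{12})^{\triangle}_{-})\geq 6$; (b) $M(11,6)\geq |M_{12}|=95040$; (c) $M(10,6)\geq 8640$.
   Context: $hd(\pi,\sigma)$ is the number of points at which permutations $\pi,\sigma$ differ; $hd(A)$ is the minimum over distinct pairs in $A$. For a permutation $\pi$ of $\Omega$, $\pi^{\triangle}$ is defined by $\pi^{\triangle}(\pi^{-1}(F))=\pi(F)$, $\pi^{\triangle}(F)=F$, $\pi^{\triangle}(x)=\pi(x)$ otherwise; $\pi^{\triangle}_{-}$ is its restriction to $\Omega\setminus\{F\}$; for a set $S$ of permutations, $S^{\triangle}_{-}=\{\pi^{\triangle}_{-}:\pi\in S\}$. $M(n,d)$ is the maximum size of a set of permutations of an $n$-element set with pairwise Hamming distance at least $d$. *)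

theory Defs
  imports "HOL-Combinatorics.Permutations"
begin

definition hd :: "('a \<Rightarrow> 'a) \<Rightarrow> ('a \<Rightarrow> 'a) \<Rightarrow> nat" where
  "hd p q = card {x. p x \<noteq> q x}"

definition hd_set :: "('a \<Rightarrow> 'a) set \<Rightarrow> nat" where
  "hd_set A = Min {hd p q | p q. p \<in> A \<and> q \<in> A \<and> p \<noteq> q}"

definition M :: "nat \<Rightarrow> nat \<Rightarrow> nat" where
  "M n d = Max {card A | A. A \<subseteq> {p. p permutes {0..<n}} \<and>
                  (\<forall>p\<in>A. \<forall>q\<in>A. p \<noteq> q \<longrightarrow> d \<le> hd p q)}"

definition tri :: "'a \<Rightarrow> ('a \<Rightarrow> 'a) \<Rightarrow> 'a \<Rightarrow> 'a" where
  "tri F p x = (if x = F then F else if x = inv p F then p F else p x)"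

definition tri_minus :: "'a set \<Rightarrow> 'a \<Rightarrow> ('a \<Rightarrow> 'a) \<Rightarrow> 'a \<Rightarrow> 'a" where
  "tri_minus \<Omega> F p x = (if x \<in> \<Omega> - {F} then tri F p x else x)"

definition tri_minus_set :: "'a set \<Rightarrow> 'a \<Rightarrow> ('a \<Rightarrow> 'a) set \<Rightarrow> ('a \<Rightarrow> 'a) set" where
  "tri_minus_set \<Omega> F S = tri_minus \<Omega> F ` S"

definition perm_group_on :: "'a set \<Rightarrow> ('a \<Rightarrow> 'a) set \<Rightarrow> bool" where
  "perm_group_on \<Omega> G \<longleftrightarrow> G \<subseteq> {p. p permutes \<Omega>} \<and> id \<in> G \<and>
     (\<forall>p\<in>G. \<forall>q\<in>G. p \<circ> q \<in> G) \<and> (\<forall>p\<in>G. inv p \<in> G)"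

definition sharply_k_transitive :: "nat \<Rightarrow> 'a set \<Rightarrow> ('a \<Rightarrow> 'a) set \<Rightarrow> bool" where
  "sharply_k_transitive k \<Omega> G \<longleftrightarrow>
     (\<forall>xs ys. length xs = k \<and> distinct xs \<and> set xs \<subseteq> \<Omega> \<and>
              length ys = k \<and> distinct ys \<and> set ys \<subseteq> \<Omega> \<longrightarrow>
              (\<exists>!g. g \<in> G \<and> map g xs = ys))"

end

theory Submission
  imports Defs
begin



lemma hd_finite_le:
  assumes "p permutes X" "q permutes X"
  shows "{x. p x \<noteq> q x} \<subseteq> X"
proof
  fix x assume x: "x \<in> {x. p x \<noteq> q x}"
  show "x \<in> X"
  proof (rule ccontr)
    assume "x \<notin> X"
    then have "p x = x" "q x = x" using permutes_not_in[OF assms(1)] permutes_not_in[OF assms(2)] by simp_all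
    then show False using x by simp
  qed
qed

lemma code_le_M:
  assumes fin: "finite X" and cX: "card X = n" and A: "A \<subseteq> {p. p permutes X}"
    and dist: "\<forall>p\<in>A. \<forall>q\<in>A. p\<noteq>q \<longrightarrow> d \<le> hd p q" and d0: "0 < d"
  shows "card A \<le> M n d"
proof -
  obtain f where f: "bij_betw f {0..<n} X" using ex_bij_betw_nat_finite[OF fin] cX by auto
  define g where "g = inv_into {0..<n} f"
  have g: "bij_betw g X {0..<n}" unfolding g_def by (rule bij_betw_inv_into[OF f])
  have gf: "\<And>i. i \<in> {0..<n} \<Longrightarrow> g (f i) = i" unfolding g_def
    using f bij_betw_inv_into_left by fastforce
  have fX: "\<And>i. i \<in> {0..<n} \<Longrightarrow> f i \<in> X" using f bij_betwE by blast
  define cj where "cj p = (\<lambda>i. if i \<in> {0..<n} then g (p (f i)) else i)" for p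
  have perm: "cj p permutes {0..<n}" if "p permutes X" for p
  proof (rule bij_imp_permutes)
    have "bij_betw (g \<circ> (p \<circ> f)) {0..<n} {0..<n}"
      by (rule bij_betw_trans[OF bij_betw_trans[OF f permutes_imp_bij[OF that]] g])
    then show "bij_betw (cj p) {0..<n} {0..<n}"
      by (rule bij_betw_cong[THEN iffD1, rotated]) (simp add: cj_def)
  qed (simp add: cj_def)
  have hdeq: "hd (cj p) (cj q) = hd p q" if "p permutes X" "q permutes X" for p q
  proof -
    have ginj: "inj_on g X" using g bij_betw_def by blast
    have pX: "\<And>i. i \<in> {0..<n} \<Longrightarrow> p (f i) \<in> X" "\<And>i. i \<in> {0..<n} \<Longrightarrow> q (f i) \<in> X"
      using fX by (simp_all add: permutes_in_image[OF that(1)] permutes_in_image[OF that(2)])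
    have "{i. cj p i \<noteq> cj q i} = {i\<in>{0..<n}. p (f i) \<noteq> q (f i)}"
    proof (rule set_eqI)
      fix i show "i \<in> {i. cj p i \<noteq> cj q i} \<longleftrightarrow> i \<in> {i\<in>{0..<n}. p (f i) \<noteq> q (f i)}"
      proof (cases "i \<in> {0..<n}")
        case True
        have "g (p (f i)) = g (q (f i)) \<longleftrightarrow> p (f i) = q (f i)"
          using inj_on_eq_iff[OF ginj pX(1)[OF True] pX(2)[OF True]] by simp
        then show ?thesis using True by (simp add: cj_def)
      next
        case False then show ?thesis by (simp add: cj_def)
      qed
    qed
    moreover have "{x. p x \<noteq> q x} = f ` {i\<in>{0..<n}. p (f i) \<noteq> q (f i)}"
    proof -
      have "{x. p x \<noteq> q x} \<subseteq> X" using hd_finite_le[OF that] .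
      have fg: "\<And>x. x \<in> X \<Longrightarrow> f (g x) = x" unfolding g_def
        using f bij_betw_inv_into_right by fastforce
      have gX: "\<And>x. x \<in> X \<Longrightarrow> g x \<in> {0..<n}" using g bij_betwE by blast
      show ?thesis
      proof
        show "{x. p x \<noteq> q x} \<subseteq> f ` {i\<in>{0..<n}. p (f i) \<noteq> q (f i)}"
        proof
          fix x assume x: "x \<in> {x. p x \<noteq> q x}"
          then have "x \<in> X" using \<open>{x. p x \<noteq> q x} \<subseteq> X\<close> by blast
          then show "x \<in> f ` {i\<in>{0..<n}. p (f i) \<noteq> q (f i)}"
            using x fg[of x] gX[of x] by (intro image_eqI[of _ _ "g x"]) auto
        qed
      qed auto
    qed
    moreover have "inj_on f {i\<in>{0..<n}. p (f i) \<noteq> q (f i)}"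
      by (rule inj_on_subset[OF bij_betw_imp_inj_on[OF f]]) auto
    ultimately show ?thesis unfolding hd_def by (simp add: card_image)
  qed
  have inj: "inj_on cj A"
  proof (rule inj_onI, rule ccontr)
    fix p q assume "p \<in> A" "q \<in> A" "cj p = cj q" "p \<noteq> q"
    then have "d \<le> hd p q" using dist by blast
    also have "hd p q = hd (cj p) (cj q)" using hdeq[of p q] A \<open>p\<in>A\<close> \<open>q\<in>A\<close> by (metis (no_types, lifting) mem_Collect_eq subsetD)
    also have "\<dots> = 0" using \<open>cj p = cj q\<close> by (simp add: hd_def)
    finally show False using d0 by simp
  qed
  have sub: "cj ` A \<subseteq> {p. p permutes {0..<n}}" using A perm by auto
  have dist2: "\<forall>p\<in>cj ` A. \<forall>q\<in>cj ` A. p \<noteq> q \<longrightarrow> d \<le> hd p q"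
  proof (intro ballI impI)
    fix p' q' assume "p' \<in> cj ` A" "q' \<in> cj ` A" "p' \<noteq> q'"
    then obtain p q where "p \<in> A" "q \<in> A" "p' = cj p" "q' = cj q" by blast
    then show "d \<le> hd p' q'" using dist hdeq[of p q] A \<open>p' \<noteq> q'\<close> by (metis (no_types, lifting) mem_Collect_eq subsetD)
  qed
  define P where "P = {p. p permutes {0..<n::nat}}"
  have fin2: "finite {card B |B. B \<subseteq> P \<and>
                  (\<forall>p\<in>B. \<forall>q\<in>B. p \<noteq> q \<longrightarrow> d \<le> hd p q)}"
  proof (rule finite_subset)
    show "{card B |B. B \<subseteq> P \<and> (\<forall>p\<in>B. \<forall>q\<in>B. p \<noteq> q \<longrightarrow> d \<le> hd p q)} \<subseteq> card ` Pow P"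
      by (auto simp del: )
    show "finite (card ` Pow P)" unfolding P_def by (simp add: finite_permutations)
  qed
  have mem: "card (cj ` A) \<in> {card B |B. B \<subseteq> P \<and>
                  (\<forall>p\<in>B. \<forall>q\<in>B. p \<noteq> q \<longrightarrow> d \<le> hd p q)}"
    using sub dist2 unfolding P_def by (intro CollectI exI[of _ "cj ` A"]) simp
  have "card (cj ` A) \<le> M n d" unfolding M_def using Max_ge[OF fin2 mem] unfolding P_def .
  then show ?thesis using card_image[OF inj] by simp
qed




lemma shD:
  assumes "sharply_k_transitive k \<Omega> G" "length xs = k" "distinct xs" "set xs \<subseteq> \<Omega>"
    "length ys = k" "distinct ys" "set ys \<subseteq> \<Omega>"
  shows "\<exists>!g. g \<in> G \<and> map g xs = ys"
  using assms unfolding sharply_k_transitive_def by blast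

lemma agree4:
  assumes G: "G \<subseteq> {p. p permutes \<Omega>}" and sh: "sharply_k_transitive 5 \<Omega> G"
    and p: "p \<in> G" and q: "q \<in> G" and ne: "p \<noteq> q"
  shows "card {x\<in>\<Omega>. p x = q x} \<le> 4"
proof (rule ccontr)
  assume "\<not> ?thesis"
  then have "5 \<le> card {x\<in>\<Omega>. p x = q x}" by simp
  then obtain T where T: "T \<subseteq> {x\<in>\<Omega>. p x = q x}" "card T = 5" "finite T"
    by (rule obtain_subset_with_card_n)
  obtain xs where xs: "set xs = T" "distinct xs" using finite_distinct_list[OF T(3)] by blast
  have len: "length xs = 5" using distinct_card[OF xs(2)] xs(1) T(2) by simp
  have pp: "p permutes \<Omega>" using G p by auto
  have "distinct (map p xs)" using xs(2) inj_on_subset[OF permutes_inj[OF pp] subset_UNIV] by (simp add: distinct_map)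
  moreover have "set (map p xs) \<subseteq> \<Omega>" using T(1) xs(1) permutes_in_image[OF pp] by auto
  moreover have "set xs \<subseteq> \<Omega>" using T(1) xs(1) by auto
  ultimately have "\<exists>!g. g \<in> G \<and> map g xs = map p xs"
    using len by (intro shD[OF sh len xs(2)]) auto
  moreover have "map q xs = map p xs" using T(1) xs(1) by auto
  ultimately show False using p q ne by blast
qed

lemma prod_8_12: "\<Prod>{8..12::nat} = 95040"
  proof -
  have "{8..12::nat} = {8,9,10,11,12}" by auto
  then show ?thesis by simp
qed

lemma cardG:
  assumes fin: "finite \<Omega>" and c: "card \<Omega> = 12"
    and G: "G \<subseteq> {p. p permutes \<Omega>}" and sh: "sharply_k_transitive 5 \<Omega> G"
  shows "card G = 95040"
proof -
  obtain T where T: "T \<subseteq> \<Omega>" "card T = 5" "finite T"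
    using obtain_subset_with_card_n[of 5 \<Omega>] c by auto
  obtain xs where xs: "set xs = T" "distinct xs" using finite_distinct_list[OF T(3)] by blast
  have len: "length xs = 5" using distinct_card[OF xs(2)] xs(1) T(2) by simp
  define Tup where "Tup = {ys. length ys = 5 \<and> distinct ys \<and> set ys \<subseteq> \<Omega>}"
  have "bij_betw (\<lambda>g. map g xs) G Tup"
  proof (rule bij_betw_imageI)
    show "inj_on (\<lambda>g. map g xs) G"
    proof (rule inj_onI)
      fix p q assume pq: "p \<in> G" "q \<in> G" "map p xs = map q xs"
      have pp: "p permutes \<Omega>" using G pq by auto
      have "distinct (map p xs)" using xs(2) inj_on_subset[OF permutes_inj[OF pp] subset_UNIV] by (simp add: distinct_map)
      moreover have "set (map p xs) \<subseteq> \<Omega>" using T(1) xs(1) permutes_in_image[OF pp] by auto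
      ultimately have "\<exists>!g. g \<in> G \<and> map g xs = map p xs"
        using T(1) xs(1) using len by (intro shD[OF sh len xs(2)]) auto
      then show "p = q" using pq by auto
    qed
    show "(\<lambda>g. map g xs) ` G = Tup"
    proof
      show "(\<lambda>g. map g xs) ` G \<subseteq> Tup"
      proof
        fix ys assume "ys \<in> (\<lambda>g. map g xs) ` G"
        then obtain p where p: "p \<in> G" "ys = map p xs" by blast
        have pp: "p permutes \<Omega>" using G p by auto
        have "distinct (map p xs)" using xs(2) inj_on_subset[OF permutes_inj[OF pp] subset_UNIV] by (simp add: distinct_map)
        moreover have "set (map p xs) \<subseteq> \<Omega>" using T(1) xs(1) permutes_in_image[OF pp] by auto
        ultimately show "ys \<in> Tup" using p len unfolding Tup_def by auto
      qed
      show "Tup \<subseteq> (\<lambda>g. map g xs) ` G"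
      proof
        fix ys assume "ys \<in> Tup"
        then have "\<exists>!g. g \<in> G \<and> map g xs = ys"
          using T(1) xs(1) unfolding Tup_def using len by (intro shD[OF sh len xs(2)]) auto
        then show "ys \<in> (\<lambda>g. map g xs) ` G" by (metis image_eqI)
      qed
    qed
  qed
  then have "card G = card Tup" by (rule bij_betw_same_card)
  also have "card Tup = \<Prod>{card \<Omega> - 5 + 1 .. card \<Omega>}"
    unfolding Tup_def by (rule card_lists_distinct_length_eq[OF fin]) (simp add: c)
  also have "\<dots> = 95040" using c prod_8_12 by simp
  finally show ?thesis .
qed

lemma tm_formula:
  assumes pp: "p permutes \<Omega>" and F: "F \<in> \<Omega>"
  shows "tri_minus \<Omega> F p = p \<circ> transpose F (inv p F)"
proof
  fix x
  have a: "inv p F \<in> \<Omega>" using permutes_in_image[OF permutes_inv[OF pp]] F by simp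
  have pa: "p (inv p F) = F" using permutes_inverses(1)[OF pp] .
  show "tri_minus \<Omega> F p x = (p \<circ> transpose F (inv p F)) x"
  proof (cases "x \<in> \<Omega>")
    case False
    then have "x \<noteq> F" "x \<noteq> inv p F" using a F by auto
    then show ?thesis using False permutes_not_in[OF pp False]
      by (simp add: tri_minus_def)
  qed (auto simp: tri_minus_def tri_def pa transpose_def)
qed

lemma tm_permutes:
  assumes pp: "p permutes \<Omega>" and F: "F \<in> \<Omega>"
  shows "tri_minus \<Omega> F p permutes (\<Omega> - {F})"
proof -
  let ?h = "tri_minus \<Omega> F p"
  have a: "inv p F \<in> \<Omega>" using permutes_in_image[OF permutes_inv[OF pp]] F by simp
  have h: "?h permutes \<Omega>" unfolding tm_formula[OF pp F]
    using permutes_compose[OF permutes_swap_id[OF F a] pp]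
    by simp
  have hF: "?h F = F" by (simp add: tri_minus_def)
  have "insert F (\<Omega> - {F}) = \<Omega>" using F by auto
  then have "transpose F (?h F) \<circ> ?h permutes (\<Omega> - {F})"
    using permutes_insert_lemma[of ?h F "\<Omega> - {F}"] h by simp
  then show ?thesis using hF by simp
qed

lemma tm_apply:
  assumes "x \<in> \<Omega> - {F}"
  shows "tri_minus \<Omega> F p x = (if x = inv p F then p F else p x)"
  using assms by (simp add: tri_minus_def tri_def)




lemma no_3perm:
  assumes inj: "inj r" and inT: "\<And>t. t \<in> T \<Longrightarrow> r t \<in> T"
    and nf: "\<And>t. t \<in> T \<Longrightarrow> r t \<noteq> t" and r3: "\<And>t. r (r (r t)) = t"
    and fin: "finite T" and c: "card T = 5"
  shows False
proof -
  define Ob where "Ob t = {t, r t, r (r t)}" for t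
  have cO: "card (Ob t) = 3" if "t \<in> T" for t
  proof -
    have "r t \<noteq> t" using nf that .
    moreover have "r (r t) \<noteq> r t" using nf inT that by blast
    moreover have "r (r t) \<noteq> t"
    proof
      assume "r (r t) = t" then have "r (r (r t)) = r t" by simp
      then show False using r3[of t] \<open>r t \<noteq> t\<close> by simp
    qed
    ultimately show ?thesis unfolding Ob_def by auto
  qed
  have OT: "Ob t \<subseteq> T" if "t \<in> T" for t using that inT unfolding Ob_def by auto
  have "T \<noteq> {}" using c by auto
  then obtain t where t: "t \<in> T" by blast
  have "card (T - Ob t) = 2" using card_Diff_subset[OF finite_subset[OF OT[OF t] fin] OT[OF t]] cO[OF t] c by simp
  then obtain u where u: "u \<in> T - Ob t" by (metis all_not_in_conv card.empty zero_neq_numeral)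
  have stay: "r v \<in> T - Ob t" if v: "v \<in> T - Ob t" for v
  proof -
    have "r v \<in> T" using v inT by blast
    moreover have "r v \<noteq> t"
    proof
      assume "r v = t" then have "r (r (r v)) = r (r t)" by simp
      then have "v = r (r t)" using r3 by simp
      then show False using v unfolding Ob_def by auto
    qed
    moreover have "r v \<noteq> r t" using v inj unfolding Ob_def by (auto dest: injD)
    moreover have "r v \<noteq> r (r t)" using v inj unfolding Ob_def by (auto dest: injD)
    ultimately show ?thesis unfolding Ob_def by auto
  qed
  have "Ob u \<subseteq> T - Ob t" using u stay[OF u] stay[OF stay[OF u]] unfolding Ob_def by auto
  then have "card (Ob u) \<le> card (T - Ob t)" using fin by (intro card_mono) auto
  then show False using cO u \<open>card (T - Ob t) = 2\<close> by auto
qed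




lemma key:
  assumes fin: "finite \<Omega>" and c12: "card \<Omega> = 12" and F: "F \<in> \<Omega>"
    and pg: "perm_group_on \<Omega> G" and sh: "sharply_k_transitive 5 \<Omega> G"
    and p: "p \<in> G" and q: "q \<in> G" and ne: "p \<noteq> q"
  shows "card {x\<in>\<Omega>-{F}. tri_minus \<Omega> F p x = tri_minus \<Omega> F q x} \<le> 5"
proof -
  have Gp: "G \<subseteq> {p. p permutes \<Omega>}" using pg unfolding perm_group_on_def by blast
  have pp: "p permutes \<Omega>" and qp: "q permutes \<Omega>" using Gp p q by auto
  define a where "a = inv p F"
  define b where "b = inv q F"
  have pa: "p a = F" unfolding a_def using permutes_inverses(1)[OF pp] .
  have qb: "q b = F" unfolding b_def using permutes_inverses(1)[OF qp] .
  define Agr where "Agr = {x\<in>\<Omega>-{F}. tri_minus \<Omega> F p x = tri_minus \<Omega> F q x}"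
  define S where "S = {x\<in>\<Omega>. p x = q x} - {F,a,b}"
  have finA: "finite Agr" unfolding Agr_def using fin by simp
  have finS: "finite S" unfolding S_def using fin by simp
  have cS: "card S \<le> 4"
    using card_mono[of "{x\<in>\<Omega>. p x = q x}" S] agree4[OF Gp sh p q ne] fin unfolding S_def by auto
  have tmp: "\<And>x. x \<in> \<Omega>-{F} \<Longrightarrow> tri_minus \<Omega> F p x = (if x = a then p F else p x)"
    unfolding a_def by (rule tm_apply)
  have tmq: "\<And>x. x \<in> \<Omega>-{F} \<Longrightarrow> tri_minus \<Omega> F q x = (if x = b then q F else q x)"
    unfolding b_def by (rule tm_apply)
  have sub: "Agr \<subseteq> S \<union> (Agr \<inter> {a,b})"
  proof
    fix x assume x: "x \<in> Agr"
    show "x \<in> S \<union> (Agr \<inter> {a,b})"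
    proof (cases "x \<in> {a,b}")
      case False
      then show ?thesis using x tmp[of x] tmq[of x] unfolding Agr_def S_def by auto
    qed (use x in auto)
  qed
  have le: "card Agr \<le> card S + card (Agr \<inter> {a,b})"
    using card_mono[OF _ sub] card_Un_le[of S "Agr \<inter> {a,b}"] finS finA by simp
  show ?thesis
  proof (cases "a = b \<or> \<not> (a \<in> Agr \<and> b \<in> Agr) \<or> card S \<le> 3")
    case True
    have "card (Agr \<inter> {a,b}) \<le> card {a,b}" by (rule card_mono) auto
    also have "card {a,b} \<le> 2" by (simp add: card_insert_if)
    finally have "card (Agr \<inter> {a,b}) \<le> 2" .
    moreover have "a = b \<or> \<not> (a \<in> Agr \<and> b \<in> Agr) \<Longrightarrow> card (Agr \<inter> {a,b}) \<le> 1"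
    proof -
      assume "a = b \<or> \<not> (a \<in> Agr \<and> b \<in> Agr)"
      then have "Agr \<inter> {a,b} \<subseteq> {a} \<or> Agr \<inter> {a,b} \<subseteq> {b}" by auto
      then show ?thesis using card_mono[of "{a}" "Agr \<inter> {a,b}"] card_mono[of "{b}" "Agr \<inter> {a,b}"] by auto
    qed
    ultimately show ?thesis using True le cS unfolding Agr_def[symmetric] by linarith
  next
    case False
    then have ab: "a \<noteq> b" "a \<in> Agr" "b \<in> Agr" "card S = 4" using cS by auto
    then have aF: "a \<in> \<Omega>" "a \<noteq> F" and bF: "b \<in> \<Omega>" "b \<noteq> F" unfolding Agr_def by auto
    have e1: "p F = q a" using ab(2) tmp[of a] tmq[of a] ab(1) aF unfolding Agr_def by auto
    have e2: "p b = q F" using ab(3) tmp[of b] tmq[of b] ab(1) bF unfolding Agr_def by auto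
    define r where "r = inv q \<circ> p"
    have iq: "\<And>x. inv q (q x) = x" using permutes_inverses(2)[OF qp] .
    have rG: "r \<in> G" using pg p q unfolding perm_group_on_def r_def by blast
    have rp: "r permutes \<Omega>" using Gp rG by auto
    have rinj: "inj r" using permutes_inj[OF rp] .
    have rS: "\<And>s. s \<in> S \<Longrightarrow> r s = s" unfolding r_def S_def using iq by auto
    have rF: "r F = a" unfolding r_def using e1 iq by simp
    have ra: "r a = b" unfolding r_def using pa b_def by simp
    have rb: "r b = F" unfolding r_def using e2 iq by simp
    have SO: "S \<subseteq> \<Omega>" unfolding S_def by auto
    have SD: "S \<inter> {F,a,b} = {}" unfolding S_def by auto
    have c7: "card (S \<union> {F,a,b}) = 7"
      using card_Un_disjoint[OF finS _ SD] ab(1) aF bF ab(4) by simp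
    have rne: "r \<noteq> id" using rF aF by auto
    define r3 where "r3 = r \<circ> r \<circ> r"
    have r3G: "r3 \<in> G" using pg rG unfolding perm_group_on_def r3_def by blast
    have r3id: "r3 = id"
    proof (rule ccontr)
      assume "r3 \<noteq> id"
      have idG: "id \<in> G" using pg unfolding perm_group_on_def by blast
      have "card {x\<in>\<Omega>. r3 x = id x} \<le> 4" by (rule agree4[OF Gp sh r3G idG \<open>r3 \<noteq> id\<close>])
      moreover have "S \<union> {F,a,b} \<subseteq> {x\<in>\<Omega>. r3 x = id x}"
        using SO F aF bF rS rF ra rb unfolding r3_def by auto
      ultimately show False using card_mono[of "{x\<in>\<Omega>. r3 x = id x}" "S \<union> {F,a,b}"] c7 fin by simp
    qed
    have r3t: "\<And>t. r (r (r t)) = t" using r3id unfolding r3_def by (metis comp_apply id_apply)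
    define T where "T = \<Omega> - (S \<union> {F,a,b})"
    have cT: "card T = 5" unfolding T_def using card_Diff_subset[of "S \<union> {F,a,b}" \<Omega>] c7 c12 SO F aF bF finS by auto
    have finT: "finite T" unfolding T_def using fin by simp
    have nf: "r t \<noteq> t" if t: "t \<in> T" for t
    proof
      assume rt: "r t = t"
      have idG: "id \<in> G" using pg unfolding perm_group_on_def by blast
      have "card {x\<in>\<Omega>. r x = id x} \<le> 4" by (rule agree4[OF Gp sh rG idG rne])
      moreover have "insert t S \<subseteq> {x\<in>\<Omega>. r x = id x}" using t rt rS SO unfolding T_def by auto
      moreover have "card (insert t S) = 5" using t finS ab(4) unfolding T_def by simp
      ultimately show False using card_mono[of "{x\<in>\<Omega>. r x = id x}" "insert t S"] fin by simp
    qed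
    have inT: "r t \<in> T" if t: "t \<in> T" for t
    proof -
      have "r t \<in> \<Omega>" using t permutes_in_image[OF rp] unfolding T_def by auto
      moreover have "r t \<notin> S"
      proof
        assume "r t \<in> S" then have "r t = r (r t)" using rS by simp
        then have "t = r t" using injD[OF rinj] by metis
        then show False using nf[OF t] by auto
      qed
      moreover have "r t \<noteq> F" using rb t injD[OF rinj, of t b] unfolding T_def by auto
      moreover have "r t \<noteq> a" using rF t injD[OF rinj, of t F] unfolding T_def by auto
      moreover have "r t \<noteq> b" using ra t injD[OF rinj, of t a] unfolding T_def by auto
      ultimately show ?thesis unfolding T_def by auto
    qed
    show ?thesis using no_3perm[OF rinj inT nf r3t finT cT] by simp
  qed
qed




lemma hd_comp_transpose:
  "hd (transpose u v \<circ> P) (transpose u v \<circ> Q) = hd P Q"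
proof -
  have "{x. (transpose u v \<circ> P) x \<noteq> (transpose u v \<circ> Q) x} = {x. P x \<noteq> Q x}"
    unfolding comp_def using inj_eq[OF inj_transpose[of u v]] by simp
  then show ?thesis unfolding hd_def by simp
qed

theorem proposition17:
  fixes \<Omega> :: "'a set" and F :: 'a and M12 :: "('a \<Rightarrow> 'a) set"
  assumes "finite \<Omega>" and "card \<Omega> = 12" and "F \<in> \<Omega>"
    and "perm_group_on \<Omega> M12" and "sharply_k_transitive 5 \<Omega> M12"
  shows "hd_set (tri_minus_set \<Omega> F M12) \<ge> 6
         \<and> (card M12 = 95040 \<and> M 11 6 \<ge> card M12)
         \<and> M 10 6 \<ge> 8640"
proof -
  note fin = assms(1) and c12 = assms(2) and F = assms(3) and pg = assms(4) and sh = assms(5)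
  have Gp: "M12 \<subseteq> {p. p permutes \<Omega>}" using pg unfolding perm_group_on_def by blast
  have cG: "card M12 = 95040" by (rule cardG[OF fin c12 Gp sh])
  define tm where "tm = tri_minus \<Omega> F"
  define TM where "TM = tri_minus_set \<Omega> F M12"
  have TMi: "TM = tm ` M12" unfolding TM_def tm_def tri_minus_set_def ..
  have finX: "finite (\<Omega> - {F})" using fin by simp
  have c11: "card (\<Omega> - {F}) = 11" using c12 F fin by simp
  have tmperm: "tm p permutes (\<Omega> - {F})" if "p \<in> M12" for p
    unfolding tm_def using tm_permutes[of p \<Omega> F] Gp that F by auto
  have hd6: "6 \<le> hd (tm p) (tm q)" if pq: "p \<in> M12" "q \<in> M12" "p \<noteq> q" for p q
  proof -
    define Agr where "Agr = {x\<in>\<Omega>-{F}. tm p x = tm q x}"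
    have cA: "card Agr \<le> 5" unfolding Agr_def tm_def by (rule key[OF fin c12 F pg sh pq])
    have "{x. tm p x \<noteq> tm q x} = (\<Omega> - {F}) - Agr"
      using hd_finite_le[OF tmperm[OF pq(1)] tmperm[OF pq(2)]] unfolding Agr_def by auto
    moreover have "card ((\<Omega> - {F}) - Agr) = 11 - card Agr"
    proof -
      have AS: "Agr \<subseteq> \<Omega> - {F}" unfolding Agr_def by auto
      show ?thesis using card_Diff_subset[OF finite_subset[OF AS finX] AS] c11 by simp
    qed
    ultimately show ?thesis unfolding hd_def using cA by simp
  qed
  have inj: "inj_on tm M12"
  proof (rule inj_onI, rule ccontr)
    fix p q assume "p \<in> M12" "q \<in> M12" "tm p = tm q" "p \<noteq> q"
    then show False using hd6[of p q] by (simp add: hd_def)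
  qed
  have cTM: "card TM = 95040" using card_image[OF inj] cG TMi by simp
  have finTM: "finite TM" using cTM by (intro card_ge_0_finite) simp
  have TMsub: "TM \<subseteq> {p. p permutes (\<Omega> - {F})}" using TMi tmperm by auto
  have dist: "\<forall>P\<in>TM. \<forall>Q\<in>TM. P \<noteq> Q \<longrightarrow> 6 \<le> hd P Q"
    using hd6 TMi by auto
  have a: "hd_set TM \<ge> 6"
  proof -
    define H where "H = {hd P Q | P Q. P \<in> TM \<and> Q \<in> TM \<and> P \<noteq> Q}"
    have "H \<subseteq> (\<lambda>(P,Q). hd P Q) ` (TM \<times> TM)" unfolding H_def by auto
    then have finH: "finite H" using finTM by (meson finite_SigmaI finite_imageI finite_subset)
    have "\<not> card TM \<le> Suc 0" using cTM by simp
    then obtain P Q where "P \<in> TM" "Q \<in> TM" "P \<noteq> Q" using card_le_Suc0_iff_eq[OF finTM] by blast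
    then have "H \<noteq> {}" unfolding H_def by blast
    then show ?thesis unfolding hd_set_def H_def[symmetric]
      using Min_ge_iff[OF finH] dist unfolding H_def by auto
  qed
  have b: "card M12 \<le> M 11 6"
    using code_le_M[OF finX c11 TMsub dist] cTM cG by simp
  have c: "8640 \<le> M 10 6"
  proof -
    obtain c0 where c0: "c0 \<in> \<Omega> - {F}" using c11 by (metis card.empty ex_in_conv zero_neq_numeral)
    define Cl where "Cl y = {P\<in>TM. P c0 = y}" for y
    have TMU: "TM \<subseteq> (\<Union>y\<in>\<Omega>-{F}. Cl y)"
    proof
      fix P assume P: "P \<in> TM"
      then have "P permutes \<Omega> - {F}" using TMsub by auto
      then have "P c0 \<in> \<Omega> - {F}" using permutes_in_image[of P "\<Omega> - {F}" c0] c0 by simp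
      then show "P \<in> (\<Union>y\<in>\<Omega>-{F}. Cl y)" using P unfolding Cl_def by auto
    qed
    have U: "(\<Union>y\<in>\<Omega>-{F}. Cl y) \<subseteq> TM" by (auto simp: Cl_def)
    have "card TM \<le> card (\<Union>y\<in>\<Omega>-{F}. Cl y)" by (rule card_mono[OF finite_subset[OF U finTM] TMU])
    also have "\<dots> \<le> (\<Sum>y\<in>\<Omega>-{F}. card (Cl y))" by (rule card_UN_le[OF finX])
    finally have sum: "95040 \<le> (\<Sum>y\<in>\<Omega>-{F}. card (Cl y))" using cTM by simp
    obtain y where y: "y \<in> \<Omega> - {F}" "8640 \<le> card (Cl y)"
    proof (rule ccontr)
      assume "\<not> thesis"
      then have "\<And>y. y \<in> \<Omega> - {F} \<Longrightarrow> card (Cl y) \<le> 8639" using that by force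
      then have "(\<Sum>y\<in>\<Omega>-{F}. card (Cl y)) \<le> of_nat (card (\<Omega> - {F})) * 8639"
        by (rule sum_bounded_above)
      then show False using sum c11 by simp
    qed
    define X where "X = \<Omega> - {F} - {c0}"
    have finX': "finite X" unfolding X_def using fin by simp
    have c10: "card X = 10" unfolding X_def using c11 c0 finX by simp
    define \<tau> where "\<tau> = transpose c0 y"
    define D where "D = (\<lambda>P. \<tau> \<circ> P) ` Cl y"
    have Dsub: "D \<subseteq> {p. p permutes X}"
    proof
      fix P' assume "P' \<in> D"
      then obtain P where P: "P \<in> Cl y" "P' = \<tau> \<circ> P" unfolding D_def by blast
      have Pp: "P permutes insert c0 X" using P(1) TMsub c0 unfolding Cl_def X_def
        by (auto simp: insert_absorb)
      have "transpose c0 (P c0) \<circ> P permutes X" by (rule permutes_insert_lemma[OF Pp])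
      then show "P' \<in> {p. p permutes X}" using P unfolding Cl_def \<tau>_def by simp
    qed
    have injD: "inj_on (\<lambda>P. \<tau> \<circ> P) (Cl y)"
    proof (rule inj_onI)
      fix P Q assume "\<tau> \<circ> P = \<tau> \<circ> Q"
      then have "\<tau> \<circ> (\<tau> \<circ> P) = \<tau> \<circ> (\<tau> \<circ> Q)" by simp
      then show "P = Q" unfolding \<tau>_def by (simp add: comp_assoc[symmetric])
    qed
    have distD: "\<forall>P\<in>D. \<forall>Q\<in>D. P \<noteq> Q \<longrightarrow> 6 \<le> hd P Q"
    proof (intro ballI impI)
      fix P' Q' assume "P' \<in> D" "Q' \<in> D" "P' \<noteq> Q'"
      then obtain P Q where "P \<in> Cl y" "Q \<in> Cl y" "P' = \<tau> \<circ> P" "Q' = \<tau> \<circ> Q" "P \<noteq> Q"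
        unfolding D_def by blast
      then show "6 \<le> hd P' Q'" using dist hd_comp_transpose[of c0 y P Q] unfolding Cl_def \<tau>_def by auto
    qed
    have "card D = card (Cl y)" unfolding D_def by (rule card_image[OF injD])
    then show ?thesis using code_le_M[OF finX' c10 Dsub distD] y by simp
  qed
  show ?thesis using a b c cG unfolding TM_def by simp
qed


end
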